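(* Let $1\le k<n$ and let $C_k=[c_{ij}]_{i,j=1}^k$ be the upper-left $k\times k$ submatrix of an incomplete $n\times n$ pairwise comparison matrix, with $s_i$ the number of missing entries in the $i$-th row of $C_k$. Let $A_k$ be the $k\times k$ matrix with diagonal entries $(A_k)_{ii}=n-s_i-1$ and off-diagonal entries $(A_k)_{ij}=-1$ if $c_{ij}$ is known and $(A_k)_{ij}=0$ if $c_{ij}=?$. Then $A_k$ is invertible; hence the geometric incomplete HRE system $A_k\widehat w=b$ has a unique solution for every $b\in\mathbb{R}^k$.
   Context: An incomplete pairwise comparison matrix has entries either positive reals or unknown, written $c_{ij}=c_{ji}=?$, with known entries satisfying $c_{ii}=1$ and $c_{ij}=1/c_{ji}$. In the geometric HRE method $\widehat w$ is the vector of logarithms of the unknown weights of $a_1,\dots,a_k$, and $b$ depends on the known comparisons and reference weights. *)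

theory Defs
  imports "Jordan_Normal_Form.Matrix"
begin

text \<open>An incomplete n x n pairwise comparison matrix, indices 0..n-1.
  None represents an unknown entry ("?"), Some x a known entry.\<close>
definition incomplete_pcm :: "nat \<Rightarrow> (nat \<Rightarrow> nat \<Rightarrow> real option) \<Rightarrow> bool" where
  "incomplete_pcm n c \<longleftrightarrow>
     (\<forall>i<n. c i i = Some 1) \<and>
     (\<forall>i<n. \<forall>j<n. c i j = None \<longleftrightarrow> c j i = None) \<and>
     (\<forall>i<n. \<forall>j<n. \<forall>x. c i j = Some x \<longrightarrow> x > 0 \<and> c j i = Some (1 / x))"

definition missing_count :: "(nat \<Rightarrow> nat \<Rightarrow> real option) \<Rightarrow> nat \<Rightarrow> nat \<Rightarrow> nat" where
  "missing_count c k i = card {j. j < k \<and> c i j = None}"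

definition hre_matrix :: "nat \<Rightarrow> (nat \<Rightarrow> nat \<Rightarrow> real option) \<Rightarrow> nat \<Rightarrow> real mat" where
  "hre_matrix n c k = mat k k (\<lambda>(i, j).
      if i = j then real n - real (missing_count c k i) - 1
      else if c i j = None then 0 else -1)"

end

theory Submission
  imports Defs "Jordan_Normal_Form.Determinant"
begin

lemma hre_kernel:
  fixes n k :: nat and c :: "nat \<Rightarrow> nat \<Rightarrow> real option"
  assumes pcm: "incomplete_pcm n c" and k1: "1 \<le> k" and kn: "k < n"
    and v: "v \<in> carrier_vec k" and Av: "hre_matrix n c k *\<^sub>v v = 0\<^sub>v k"
  shows "v = 0\<^sub>v k"
proof -
  let ?A = "hre_matrix n c k"
  have fin: "finite ((\<lambda>j. \<bar>v $ j\<bar>) ` {0..<k})" by simp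
  have ne: "(\<lambda>j. \<bar>v $ j\<bar>) ` {0..<k} \<noteq> {}" using k1 by auto
  obtain i where i: "i < k" and iM: "\<bar>v $ i\<bar> = Max ((\<lambda>j. \<bar>v $ j\<bar>) ` {0..<k})"
    using Max_in[OF fin ne] by auto
  define M where "M = \<bar>v $ i\<bar>"
  have Mj: "\<bar>v $ j\<bar> \<le> M" if "j < k" for j
    unfolding M_def iM using fin that by (intro Max_ge) auto
  have M0: "M \<ge> 0" unfolding M_def by simp
  define s where "s = missing_count c k i"
  define d where "d = real n - real s - 1"
  define a where "a = (\<lambda>j. if c i j = None then 0 else (-1::real))"
  have cii: "c i i = Some 1" using pcm i kn unfolding incomplete_pcm_def by auto
  have "(?A *\<^sub>v v) $ i = 0" using Av i by simp
  hence "(\<Sum>j\<in>{0..<k}. ?A $$ (i,j) * v $ j) = 0"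
    using i v by (simp add: hre_matrix_def scalar_prod_def row_def)
  hence eq: "(\<Sum>j\<in>{0..<k}. ?A $$ (i,j) * v $ j) = 0" .
  hence eq0: "(\<Sum>j\<in>{0..<k}. (if j = i then d else a j) * v $ j) = 0"
  proof -
    have "(\<Sum>j\<in>{0..<k}. ?A $$ (i,j) * v $ j) = (\<Sum>j\<in>{0..<k}. (if j = i then d else a j) * v $ j)"
      using i by (intro sum.cong) (auto simp: hre_matrix_def d_def s_def a_def)
    thus ?thesis using eq by simp
  qed
  have split: "(\<Sum>j\<in>{0..<k}. (if j = i then d else a j) * v $ j)
      = d * v $ i + (\<Sum>j\<in>{0..<k}-{i}. a j * v $ j)"
    using i by (simp add: sum.remove[of "{0..<k}" i])
  define K where "K = real (card {j\<in>{0..<k}-{i}. c i j \<noteq> None})"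
  have "\<bar>\<Sum>j\<in>{0..<k}-{i}. a j * v $ j\<bar> \<le> (\<Sum>j\<in>{0..<k}-{i}. \<bar>a j * v $ j\<bar>)"
    by (rule sum_abs)
  also have "\<dots> \<le> (\<Sum>j\<in>{0..<k}-{i}. (if c i j = None then 0 else 1) * M)"
    by (intro sum_mono) (auto simp: a_def Mj)
  also have "\<dots> = K * M"
    by (simp add: sum_distrib_right[symmetric] K_def sum.If_cases Int_def)
  finally have bnd: "\<bar>\<Sum>j\<in>{0..<k}-{i}. a j * v $ j\<bar> \<le> K * M" .
  have part: "{0..<k} = {j\<in>{0..<k}. c i j = None} \<union> {j\<in>{0..<k}-{i}. c i j \<noteq> None} \<union> {i}"
    using i cii by auto
  have "card {0..<k} = card ({j\<in>{0..<k}. c i j = None} \<union> {j\<in>{0..<k}-{i}. c i j \<noteq> None} \<union> {i})"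
    using part by metis
  also have "\<dots> = card {j\<in>{0..<k}. c i j = None} + card {j\<in>{0..<k}-{i}. c i j \<noteq> None} + card {i}"
    apply (subst card_Un_disjoint)
       apply simp apply simp using cii apply fastforce
    apply (subst card_Un_disjoint)
       apply simp apply simp apply fastforce
    by simp
  finally have "card {0..<k} = card {j\<in>{0..<k}. c i j = None} + card {j\<in>{0..<k}-{i}. c i j \<noteq> None} + card {i}" .
  hence "real k = real s + K + 1"
    by (simp add: s_def K_def missing_count_def)
  hence dK: "d = real n - real k + K" unfolding d_def by simp
  have "\<bar>d * v $ i\<bar> \<le> K * M" using eq0 split bnd by simp
  moreover have "\<bar>d * v $ i\<bar> = d * M" unfolding M_def using dK kn
    by (simp add: abs_mult K_def)
  ultimately have "(real n - real k) * M \<le> 0" using dK by (simp add: algebra_simps)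
  hence "M = 0" using kn M0 by (smt (verit) of_nat_less_iff mult_pos_pos)
  hence "\<And>j. j < k \<Longrightarrow> v $ j = 0" using Mj by fastforce
  thus ?thesis using v by (intro eq_vecI) auto
qed

theorem mainTheorem10:
  fixes n k :: nat and c :: "nat \<Rightarrow> nat \<Rightarrow> real option"
  assumes "incomplete_pcm n c" and "1 \<le> k" and "k < n"
  shows "invertible_mat (hre_matrix n c k) \<and>
         (\<forall>b \<in> carrier_vec k. \<exists>!w. w \<in> carrier_vec k \<and> hre_matrix n c k *\<^sub>v w = b)"
proof -
  let ?A = "hre_matrix n c k"
  have A: "?A \<in> carrier_mat k k" by (simp add: hre_matrix_def)
  have "det ?A \<noteq> 0"
    using det_0_iff_vec_prod_zero[OF A] hre_kernel[OF assms] by blast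
  from det_non_zero_imp_unit[OF A this, of "()"]
  obtain B where B: "B \<in> carrier_mat k k" and BA: "B * ?A = 1\<^sub>m k" and AB: "?A * B = 1\<^sub>m k"
    unfolding Units_def ring_mat_def by auto
  have inv: "invertible_mat ?A"
    unfolding invertible_mat_def inverts_mat_def square_mat.simps using A B AB BA by auto
  have "\<exists>!w. w \<in> carrier_vec k \<and> ?A *\<^sub>v w = b" if b: "b \<in> carrier_vec k" for b
  proof
    show "B *\<^sub>v b \<in> carrier_vec k \<and> ?A *\<^sub>v (B *\<^sub>v b) = b"
      using A B b AB by (simp add: assoc_mult_mat_vec[symmetric, of _ k k _ k])
  next
    fix w assume w: "w \<in> carrier_vec k \<and> ?A *\<^sub>v w = b"
    hence "B *\<^sub>v (?A *\<^sub>v w) = B *\<^sub>v b" by simp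
    moreover have "B *\<^sub>v (?A *\<^sub>v w) = (B * ?A) *\<^sub>v w"
      using A B w by (simp add: assoc_mult_mat_vec)
    ultimately show "w = B *\<^sub>v b" using BA w by simp
  qed
  thus ?thesis using inv by blast
qed

end
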